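(* Let $R$ be a Noetherian ring, $I$ an ideal of $R$, and $M$ a finitely generated $R$-module. Let $J=(x_1,\ldots,x_s)\subseteq I$ be a reduction of $I$ relative to $M$, and fix an integer $\ell \geq \mathrm{r}_J(I,M)$ such that $$[(x_1,\ldots,x_{i-1})M :_M x_i]\cap I^{\ell+1}M = (x_1,\ldots,x_{i-1})I^{\ell}M \quad \text{for } i=1,\ldots,s.$$ Then for all $n\geq \ell+1$, $$[(x_1,\ldots,x_{i-1})M :_M x_i]\cap I^{n}M = (x_1,\ldots,x_{i-1})I^{n-1}M \quad \text{for } i=1,\ldots,s.$$
   Context: For $i=1$ the ideal $(x_1,\ldots,x_{i-1})$ is the zero ideal. An ideal $J\subseteq I$ is a reduction of $I$ relative to $M$ if $JI^nM=I^{n+1}M$ for some $n\geq 0$; then $\mathrm{r}_J(I,M)=\min\{m\in\mathbb N: JI^mM=I^{m+1}M\}$. *)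

theory Defs
  imports Main "HOL.Modules"
begin

definition is_ideal :: "'a::comm_ring_1 set \<Rightarrow> bool" where
  "is_ideal I \<longleftrightarrow> module.subspace ((*) :: 'a \<Rightarrow> 'a \<Rightarrow> 'a) I"

definition ideal_gen :: "'a::comm_ring_1 set \<Rightarrow> 'a set" where
  "ideal_gen S = module.span ((*) :: 'a \<Rightarrow> 'a \<Rightarrow> 'a) S"

definition noetherian_ring :: "'a::comm_ring_1 itself \<Rightarrow> bool" where
  "noetherian_ring _ \<longleftrightarrow>
     (\<forall>I :: 'a set. is_ideal I \<longrightarrow> (\<exists>S. finite S \<and> I = ideal_gen S))"

definition ideal_prod :: "'a::comm_ring_1 set \<Rightarrow> 'a set \<Rightarrow> 'a set" where
  "ideal_prod I K = ideal_gen {a * b | a b. a \<in> I \<and> b \<in> K}"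

fun ideal_pow :: "'a::comm_ring_1 set \<Rightarrow> nat \<Rightarrow> 'a set" where
  "ideal_pow I 0 = UNIV"
| "ideal_pow I (Suc n) = ideal_prod I (ideal_pow I n)"

text \<open>The module M is the whole type 'b with scalar multiplication sc.
  Finitely generated: spanned by a finite set.\<close>
definition fin_gen_module :: "('a::comm_ring_1 \<Rightarrow> 'b::ab_group_add \<Rightarrow> 'b) \<Rightarrow> bool" where
  "fin_gen_module sc \<longleftrightarrow> (\<exists>S. finite S \<and> module.span sc S = UNIV)"

definition ideal_smult :: "('a::comm_ring_1 \<Rightarrow> 'b::ab_group_add \<Rightarrow> 'b) \<Rightarrow> 'a set \<Rightarrow> 'b set \<Rightarrow> 'b set" where
  "ideal_smult sc I N = module.span sc {sc a m | a m. a \<in> I \<and> m \<in> N}"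

definition mod_colon :: "('a::comm_ring_1 \<Rightarrow> 'b::ab_group_add \<Rightarrow> 'b) \<Rightarrow> 'b set \<Rightarrow> 'a \<Rightarrow> 'b set" where
  "mod_colon sc N y = {m. sc y m \<in> N}"

definition is_reduction :: "('a::comm_ring_1 \<Rightarrow> 'b::ab_group_add \<Rightarrow> 'b) \<Rightarrow> 'a set \<Rightarrow> 'a set \<Rightarrow> bool" where
  "is_reduction sc J I \<longleftrightarrow> J \<subseteq> I \<and>
     (\<exists>n. ideal_smult sc J (ideal_smult sc (ideal_pow I n) UNIV) = ideal_smult sc (ideal_pow I (Suc n)) UNIV)"

definition reduction_number :: "('a::comm_ring_1 \<Rightarrow> 'b::ab_group_add \<Rightarrow> 'b) \<Rightarrow> 'a set \<Rightarrow> 'a set \<Rightarrow> nat" where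
  "reduction_number sc J I = (LEAST m. ideal_smult sc J (ideal_smult sc (ideal_pow I m) UNIV) = ideal_smult sc (ideal_pow I (Suc m)) UNIV)"

end

theory Submission
  imports Defs
begin

interpretation R: module "(*) :: 'a::comm_ring_1 \<Rightarrow> 'a \<Rightarrow> 'a"
  by unfold_locales (auto simp: algebra_simps)

context module
begin

lemma sc_sp[intro]: "a *s x \<in> span S \<Longrightarrow> (a * c) *s x \<in> span S"
  by (metis mult.commute scale_scale span_scale)

lemma L1:
  assumes N: "subspace N" and a: "a \<in> ideal_gen S" and n: "n \<in> N"
  shows "scale a n \<in> span {scale s m | s m. s \<in> S \<and> m \<in> N}"
proof -
  let ?T = "span {scale s m | s m. s \<in> S \<and> m \<in> N}"
  have "a \<in> R.span S" using a by (simp add: ideal_gen_def)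
  hence "\<forall>n\<in>N. scale a n \<in> ?T"
  proof (induct rule: R.span_induct)
    case base
    show ?case
    proof (rule R.subspaceI)
      show "0 \<in> {a. \<forall>n\<in>N. scale a n \<in> ?T}" by (simp add: span_zero)
    next
      fix x y assume "x \<in> {a. \<forall>n\<in>N. scale a n \<in> ?T}" "y \<in> {a. \<forall>n\<in>N. scale a n \<in> ?T}"
      thus "x + y \<in> {a. \<forall>n\<in>N. scale a n \<in> ?T}" by (auto simp: scale_left_distrib intro: span_add)
    next
      fix c x assume x: "x \<in> {a. \<forall>n\<in>N. scale a n \<in> ?T}"
      { fix n assume n: "n \<in> N"
        have "scale c n \<in> N" using N n by (rule subspace_scale)
        hence "scale x (scale c n) \<in> ?T" using x by auto
        hence "scale (c * x) n \<in> ?T" by (simp add: mult.commute) }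
      thus "c * x \<in> {a. \<forall>n\<in>N. scale a n \<in> ?T}" by auto
    qed
  next
    case (step x)
    thus ?case by (auto intro: span_base)
  qed
  thus ?thesis using n by auto
qed

lemma L1':
  assumes N: "subspace N"
  shows "ideal_smult scale (ideal_gen S) N = ideal_smult scale S N"
proof
  show "ideal_smult scale (ideal_gen S) N \<subseteq> ideal_smult scale S N"
    unfolding ideal_smult_def
    by (rule span_minimal) (auto intro: L1[OF N])
  have "S \<subseteq> ideal_gen S" unfolding ideal_gen_def by (rule R.span_superset)
  thus "ideal_smult scale S N \<subseteq> ideal_smult scale (ideal_gen S) N"
    unfolding ideal_smult_def by (intro span_mono) blast
qed

lemma L7:
  assumes c: "\<And>w. w \<in> N \<Longrightarrow> scale c w \<in> N'" and v: "v \<in> ideal_smult scale K N"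
  shows "scale c v \<in> ideal_smult scale K N'"
proof -
  have "v \<in> span {scale a m | a m. a \<in> K \<and> m \<in> N}" using v by (simp add: ideal_smult_def)
  thus ?thesis
  proof (induct rule: span_induct)
    case base
    show ?case
    proof (rule subspaceI)
      show "0 \<in> {x. c *s x \<in> ideal_smult (*s) K N'}"
        by (simp add: ideal_smult_def span_zero)
    next
      fix x y assume "x \<in> {x. c *s x \<in> ideal_smult (*s) K N'}" "y \<in> {x. c *s x \<in> ideal_smult (*s) K N'}"
      thus "x + y \<in> {x. c *s x \<in> ideal_smult (*s) K N'}"
        by (simp add: scale_right_distrib ideal_smult_def span_add)
    next
      fix d x assume "x \<in> {x. c *s x \<in> ideal_smult (*s) K N'}"
      hence "d *s (c *s x) \<in> ideal_smult (*s) K N'" unfolding ideal_smult_def using span_scale[of "c *s x" _ d] unfolding ideal_smult_def mem_Collect_eq by blast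
      thus "d *s x \<in> {x. c *s x \<in> ideal_smult (*s) K N'}" by (simp only: scale_left_commute mem_Collect_eq)
    qed
  next
    case (step x)
    then obtain a m where "x = scale a m" "a \<in> K" "m \<in> N" by auto
    hence "c *s x = a *s (c *s m)" "c *s m \<in> N'" using c by (auto simp: mult.commute)
    thus ?case using \<open>a \<in> K\<close> unfolding ideal_smult_def
      by (metis (mono_tags, lifting) mem_Collect_eq span_base)
  qed
qed

lemma L2:
  "ideal_smult scale A (ideal_smult scale B N) = span {scale (a*b) m | a b m. a \<in> A \<and> b \<in> B \<and> m \<in> N}"
  (is "?L = ?R")
proof
  show "?L \<subseteq> ?R" unfolding ideal_smult_def
  proof (rule span_minimal, safe)
    fix a n assume a: "a \<in> A" and n: "n \<in> span {scale b m | b m. b \<in> B \<and> m \<in> N}"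
    from n show "scale a n \<in> ?R"
    proof (induct rule: span_induct)
      case base
      show ?case
      proof (rule subspaceI)
        show "0 \<in> {x. a *s x \<in> ?R}" by (simp add: span_zero)
      next
        fix x y assume "x \<in> {x. a *s x \<in> ?R}" "y \<in> {x. a *s x \<in> ?R}"
        thus "x + y \<in> {x. a *s x \<in> ?R}" by (simp add: scale_right_distrib span_add)
      next
        fix d x assume "x \<in> {x. a *s x \<in> ?R}"
        hence "d *s (a *s x) \<in> ?R" using span_scale[of "a *s x" _ d] by blast
        thus "d *s x \<in> {x. a *s x \<in> ?R}" by (simp only: scale_left_commute mem_Collect_eq)
      qed
    next
      case (step x)
      then obtain b m where "x = scale b m" "b \<in> B" "m \<in> N" by auto
      thus ?case using a by (auto intro!: span_base)
    qed
  qed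
  show "?R \<subseteq> ?L" unfolding ideal_smult_def
  proof (rule span_minimal, safe)
    fix a b m assume "a \<in> A" "b \<in> B" "m \<in> N"
    hence "scale b m \<in> span {scale b m | b m. b \<in> B \<and> m \<in> N}" by (auto intro: span_base)
    hence "scale a (scale b m) \<in> {scale a n | a n. a \<in> A \<and> n \<in> span {scale b m | b m. b \<in> B \<and> m \<in> N}}"
      using \<open>a \<in> A\<close> by blast
    thus "scale (a*b) m \<in> span {scale a n | a n. a \<in> A \<and> n \<in> span {scale b m | b m. b \<in> B \<and> m \<in> N}}"
      by (auto intro: span_base)
  qed
qed

lemma L2c: "ideal_smult scale A (ideal_smult scale B N) = ideal_smult scale B (ideal_smult scale A N)"
  unfolding L2 by (metis (no_types, lifting) mult.commute)

lemma L4: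
  assumes N: "subspace N"
  shows "ideal_smult scale (ideal_prod A B) N = ideal_smult scale A (ideal_smult scale B N)"
proof -
  have "ideal_smult scale (ideal_prod A B) N = ideal_smult scale {a * b |a b. a \<in> A \<and> b \<in> B} N"
    unfolding ideal_prod_def by (rule L1'[OF N])
  also have "\<dots> = span {scale (a*b) m | a b m. a \<in> A \<and> b \<in> B \<and> m \<in> N}"
    unfolding ideal_smult_def by (rule arg_cong[where f=span]) blast
  finally show ?thesis unfolding L2 .
qed

lemma sub_sm[simp]: "subspace (ideal_smult scale A N)"
  by (simp add: ideal_smult_def)

lemma sm_mono: "A \<subseteq> A' \<Longrightarrow> N \<subseteq> N' \<Longrightarrow> ideal_smult scale A N \<subseteq> ideal_smult scale A' N'"
  unfolding ideal_smult_def by (intro span_mono) blast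

lemma sm_sub: "subspace N \<Longrightarrow> ideal_smult scale A N \<subseteq> N"
  unfolding ideal_smult_def by (rule span_minimal) (auto intro: subspace_scale)

lemma sm_base: "c \<in> A \<Longrightarrow> v \<in> N \<Longrightarrow> scale c v \<in> ideal_smult scale A N"
  unfolding ideal_smult_def by (auto intro: span_base)

lemma L6:
  assumes N: "subspace N" and m: "m \<in> ideal_smult scale (ideal_gen (insert c S)) N"
  shows "\<exists>u v. u \<in> ideal_smult scale (ideal_gen S) N \<and> v \<in> N \<and> m = u + scale c v"
proof -
  have "m \<in> span ({scale s m | s m. s \<in> S \<and> m \<in> N} \<union> {scale c m | m. m \<in> N})"
  proof -
    have eq: "{scale s m | s m. s \<in> insert c S \<and> m \<in> N} = {scale s m | s m. s \<in> S \<and> m \<in> N} \<union> {scale c m | m. m \<in> N}"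
      by blast
    have "m \<in> ideal_smult scale (insert c S) N" using m by (simp only: L1'[OF N])
    thus ?thesis unfolding ideal_smult_def eq .
  qed
  then obtain u y where u: "u \<in> span {scale s m | s m. s \<in> S \<and> m \<in> N}"
     and y: "y \<in> span {scale c m | m. m \<in> N}" and "m = u + y"
    unfolding span_Un by blast
  have "subspace (scale c ` N)"
  proof (rule subspaceI)
    show "0 \<in> scale c ` N" using subspace_0[OF N] by (metis image_eqI scale_zero_right)
  next
    fix a b assume "a \<in> scale c ` N" "b \<in> scale c ` N"
    then obtain a' b' where "a' \<in> N" "b' \<in> N" "a = c *s a'" "b = c *s b'" by blast
    hence "a + b = c *s (a' + b')" "a' + b' \<in> N" using subspace_add[OF N] by (simp_all add: scale_right_distrib)
    thus "a + b \<in> scale c ` N" by blast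
  next
    fix d a assume "a \<in> scale c ` N"
    then obtain a' where "a' \<in> N" "a = c *s a'" by blast
    hence "d *s a = c *s (d *s a')" "d *s a' \<in> N" using subspace_scale[OF N] by (simp_all only: scale_left_commute)
    thus "d *s a \<in> scale c ` N" by blast
  qed
  hence "span {scale c m | m. m \<in> N} \<subseteq> scale c ` N" by (intro span_minimal) auto
  with y obtain v where "v \<in> N" "y = scale c v" by auto
  moreover have "u \<in> ideal_smult scale (ideal_gen S) N" unfolding L1'[OF N] using u by (simp only: ideal_smult_def)
  ultimately show ?thesis using \<open>m = u + y\<close> by blast
qed

end


theorem proposition3p5:
  fixes sc :: "'a::comm_ring_1 \<Rightarrow> 'b::ab_group_add \<Rightarrow> 'b"
    and I :: "'a set" and x :: "nat \<Rightarrow> 'a" and s l :: nat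
  assumes "noetherian_ring TYPE('a)"
    and "module sc"
    and "fin_gen_module sc"
    and "is_ideal I"
    and "is_reduction sc (ideal_gen (x ` {..<s})) I"
    and "l \<ge> reduction_number sc (ideal_gen (x ` {..<s})) I"
    and "\<forall>i<s. mod_colon sc (ideal_smult sc (ideal_gen (x ` {..<i})) UNIV) (x i)
               \<inter> ideal_smult sc (ideal_pow I (l + 1)) UNIV
             = ideal_smult sc (ideal_gen (x ` {..<i})) (ideal_smult sc (ideal_pow I l) UNIV)"
  shows "\<forall>n\<ge>l + 1. \<forall>i<s. mod_colon sc (ideal_smult sc (ideal_gen (x ` {..<i})) UNIV) (x i)
               \<inter> ideal_smult sc (ideal_pow I n) UNIV
             = ideal_smult sc (ideal_gen (x ` {..<i})) (ideal_smult sc (ideal_pow I (n - 1)) UNIV)"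
proof -
  interpret M: module sc by fact
  define Ji where "Ji i = ideal_gen (x ` {..<i})" for i
  define IM where "IM n = ideal_smult sc (ideal_pow I n) UNIV" for n
  define J where "J = Ji s"
  have IMS: "IM (Suc n) = ideal_smult sc I (IM n)" for n
    unfolding IM_def by (simp add: M.L4)
  have JI: "Ji i \<subseteq> I" if "i \<le> s" for i
  proof -
    have "Ji i \<subseteq> Ji s" unfolding Ji_def ideal_gen_def
      by (rule R.span_mono) (use that in auto)
    thus ?thesis using assms(5) unfolding is_reduction_def Ji_def by auto
  qed
  have xI: "x i \<in> I" if "i < s" for i
  proof -
    have "x i \<in> Ji s" unfolding Ji_def ideal_gen_def
      by (rule R.span_base) (use that in auto)
    thus ?thesis using JI[of s] by auto
  qed
  define Q where "Q m = (ideal_smult sc J (IM m) = IM (Suc m))" for m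
  have Qex: "\<exists>m. Q m" using assms(5) unfolding is_reduction_def Q_def J_def Ji_def IM_def by auto
  have Qr: "Q (reduction_number sc (ideal_gen (x ` {..<s})) I)"
    using LeastI_ex[OF Qex] unfolding reduction_number_def Q_def J_def Ji_def IM_def by simp
  have Qn0: "Q n" if "n \<ge> reduction_number sc (ideal_gen (x ` {..<s})) I" for n
    using that
  proof (induct n rule: dec_induct)
    case base show ?case using Qr .
  next
    case (step n)
    show ?case unfolding Q_def using step(3) unfolding Q_def IMS
      by (metis M.L2c)
  qed
  have Qn: "Q n" if "n \<ge> l" for n using Qn0 assms(6) that by auto
  have sub: "M.subspace (ideal_smult sc A N)" for A N by (rule M.sub_sm)
  have main: "\<forall>i<s. mod_colon sc (ideal_smult sc (Ji i) UNIV) (x i) \<inter> IM n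
                 = ideal_smult sc (Ji i) (IM (n - 1))" if "n \<ge> l + 1" for n
    using that
  proof (induct n rule: dec_induct)
    case base show ?case using assms(7) unfolding Ji_def IM_def by simp
  next
    case (step n)
    have IH: "mod_colon sc (ideal_smult sc (Ji i) UNIV) (x i) \<inter> IM n
                 = ideal_smult sc (Ji i) (IM (n - 1))" if "i < s" for i using step(3) that by blast
    have IMn: "IM n = ideal_smult sc I (IM (n - 1))" using IMS[of "n-1"] step(1) by simp
    have B: "ideal_smult sc (Ji (s-k)) UNIV \<inter> IM (Suc n) \<subseteq> ideal_smult sc (Ji (s-k)) (IM n)"
      if "k \<le> s" for k
      using that
    proof (induct k)
      case 0
      show ?case using Qn[of n] step(1) unfolding Q_def J_def by auto
    next
      case (Suc k)
      define j where "j = s - Suc k"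
      have j1: "Suc j = s - k" "j < s" using Suc(2) unfolding j_def by auto
      have IHk: "ideal_smult sc (Ji (Suc j)) UNIV \<inter> IM (Suc n) \<subseteq> ideal_smult sc (Ji (Suc j)) (IM n)"
        using Suc j1 by simp
      have Jsub: "Ji j \<subseteq> Ji (Suc j)" unfolding Ji_def ideal_gen_def
        by (rule R.span_mono) auto
      have Jins: "Ji (Suc j) = ideal_gen (insert (x j) (x ` {..<j}))"
        unfolding Ji_def by (simp add: lessThan_Suc)
      show ?case unfolding j_def[symmetric]
      proof
        fix m assume m: "m \<in> ideal_smult sc (Ji j) UNIV \<inter> IM (Suc n)"
        have "m \<in> ideal_smult sc (Ji (Suc j)) UNIV"
          using m M.sm_mono[OF Jsub order_refl] by blast
        hence "m \<in> ideal_smult sc (Ji (Suc j)) (IM n)" using IHk m by blast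
        hence "m \<in> ideal_smult sc (ideal_gen (insert (x j) (x ` {..<j}))) (IM n)" using Jins by simp
        then obtain u v where u: "u \<in> ideal_smult sc (Ji j) (IM n)" and v: "v \<in> IM n"
          and muv: "m = u + sc (x j) v"
          using M.L6[OF sub] unfolding Ji_def IM_def by blast
        have "u \<in> ideal_smult sc (Ji j) UNIV" using u M.sm_mono[of "Ji j" "Ji j" "IM n" UNIV] by blast
        moreover have "m \<in> ideal_smult sc (Ji j) UNIV" using m by blast
        ultimately have "m - u \<in> ideal_smult sc (Ji j) UNIV" by (rule M.subspace_diff[OF sub, rotated])
        hence "sc (x j) v \<in> ideal_smult sc (Ji j) UNIV" using muv by simp
        hence "v \<in> mod_colon sc (ideal_smult sc (Ji j) UNIV) (x j) \<inter> IM n"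
          using v unfolding mod_colon_def by simp
        hence v2: "v \<in> ideal_smult sc (Ji j) (IM (n - 1))" using IH[OF j1(2)] by simp
        have "sc (x j) v \<in> ideal_smult sc (Ji j) (IM n)"
        proof (rule M.L7[OF _ v2])
          fix w assume "w \<in> IM (n - 1)"
          thus "sc (x j) w \<in> IM n" unfolding IMn by (rule M.sm_base[OF xI[OF j1(2)]])
        qed
        thus "m \<in> ideal_smult sc (Ji j) (IM n)"
          using u muv M.subspace_add[OF sub] by simp
      qed
    qed
    show ?case
    proof (intro allI impI)
      fix i assume i: "i < s"
      have Bi: "ideal_smult sc (Ji i) UNIV \<inter> IM (Suc n) \<subseteq> ideal_smult sc (Ji i) (IM n)"
        using B[of "s - i"] i by simp
      have "ideal_smult sc I (IM n) \<subseteq> IM n" unfolding IM_def by (rule M.sm_sub[OF sub])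
      hence anti: "IM (Suc n) \<subseteq> IM n" unfolding IMS .
      show "mod_colon sc (ideal_smult sc (Ji i) UNIV) (x i) \<inter> IM (Suc n)
                 = ideal_smult sc (Ji i) (IM (Suc n - 1))"
      proof
        show "mod_colon sc (ideal_smult sc (Ji i) UNIV) (x i) \<inter> IM (Suc n)
               \<subseteq> ideal_smult sc (Ji i) (IM (Suc n - 1))"
        proof
          fix m assume m: "m \<in> mod_colon sc (ideal_smult sc (Ji i) UNIV) (x i) \<inter> IM (Suc n)"
          hence "m \<in> ideal_smult sc (Ji i) (IM (n - 1))" using IH[OF i] anti by blast
          hence "m \<in> ideal_smult sc (Ji i) UNIV" using M.sm_mono[of "Ji i" "Ji i" "IM (n-1)" UNIV] by blast
          thus "m \<in> ideal_smult sc (Ji i) (IM (Suc n - 1))" using Bi m by auto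
        qed
      next
        show "ideal_smult sc (Ji i) (IM (Suc n - 1))
               \<subseteq> mod_colon sc (ideal_smult sc (Ji i) UNIV) (x i) \<inter> IM (Suc n)"
        proof
          fix m assume m: "m \<in> ideal_smult sc (Ji i) (IM (Suc n - 1))"
          have "m \<in> ideal_smult sc (Ji i) UNIV" using m M.sm_mono[of "Ji i" "Ji i" "IM n" UNIV] by auto
          hence "sc (x i) m \<in> ideal_smult sc (Ji i) UNIV" by (rule M.subspace_scale[OF sub])
          moreover have "m \<in> IM (Suc n)" unfolding IMS
            using m M.sm_mono[OF JI[of i] order_refl, of "IM n"] i by auto
          ultimately show "m \<in> mod_colon sc (ideal_smult sc (Ji i) UNIV) (x i) \<inter> IM (Suc n)"
            unfolding mod_colon_def by simp
        qed
      qed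
    qed
  qed
  show ?thesis
  proof (intro allI impI)
    fix n i assume n: "n \<ge> l + 1" and i: "i < s"
    have "mod_colon sc (ideal_smult sc (Ji i) UNIV) (x i) \<inter> IM n
                 = ideal_smult sc (Ji i) (IM (n - 1))" using main[OF n] i by blast
    thus "mod_colon sc (ideal_smult sc (ideal_gen (x ` {..<i})) UNIV) (x i)
               \<inter> ideal_smult sc (ideal_pow I n) UNIV
             = ideal_smult sc (ideal_gen (x ` {..<i})) (ideal_smult sc (ideal_pow I (n - 1)) UNIV)"
      unfolding Ji_def IM_def .
  qed
qed

end
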